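(* If $(X_{n})$ is a nondecreasing sequence of subsets of $\mathbb{R}^{N}$, then $\mu_{N}(\overline{B}_{\cup_n X_{n}})=\lim_n \mu_{N}(\overline{B}_{X_{n}})=\sup_n \mu_{N}(\overline{B}_{X_{n}})$.
   Context: $\mu_N$ is $N$-dimensional Lebesgue measure. For nonempty bounded $X\subset\mathbb{R}^N$, $\overline{B}_X$ (the enclosing ball) is the unique closed ball of minimal diameter containing $X$; $\overline{B}_X:=\mathbb{R}^N$ if $X$ is unbounded; $\overline{B}_\emptyset:=\{0\}$. *)

theory Defs
  imports "HOL-Analysis.Analysis"
begin

definition is_closed_ball :: "'a::euclidean_space set \<Rightarrow> bool" where
  "is_closed_ball B \<longleftrightarrow> (\<exists>c r. r \<ge> 0 \<and> B = cball c r)"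

definition enclosing_ball :: "'a::euclidean_space set \<Rightarrow> 'a set" where
  "enclosing_ball X =
     (if X = {} then {0}
      else if \<not> bounded X then UNIV
      else (THE B. is_closed_ball B \<and> X \<subseteq> B \<and>
              (\<forall>B'. is_closed_ball B' \<and> X \<subseteq> B' \<longrightarrow> diameter B \<le> diameter B')))"

end

theory Submission
  imports Defs
begin

definition minball :: "'a::euclidean_space set \<Rightarrow> 'a \<Rightarrow> real \<Rightarrow> bool" where
  "minball X c r \<longleftrightarrow> r \<ge> 0 \<and> X \<subseteq> cball c r \<and> (\<forall>c' r'. X \<subseteq> cball c' r' \<longrightarrow> r \<le> r')"

lemma minball_exists:
  fixes X :: "'a::euclidean_space set"
  assumes ne: "X \<noteq> {}" and bd: "bounded X"
  shows "\<exists>c r. minball X c r"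
proof -
  obtain x0 where x0: "x0 \<in> X" using ne by blast
  obtain B where B: "\<And>y. y \<in> X \<Longrightarrow> dist x0 y \<le> B" using bd bounded_any_center[of X x0] by auto
  define f where "f c = (SUP x\<in>X. dist c x)" for c
  have bdd: "bdd_above ((\<lambda>x. dist c x) ` X)" for c
  proof (rule bdd_aboveI2)
    fix x assume "x \<in> X"
    then show "dist c x \<le> dist c x0 + B" using B[of x] dist_triangle[of c x x0] by simp
  qed
  have up: "dist c x \<le> f c" if "x \<in> X" for c x
    unfolding f_def using that bdd[of c] by (rule cSUP_upper)
  have least: "f c \<le> r" if "\<And>x. x \<in> X \<Longrightarrow> dist c x \<le> r" for c r
    unfolding f_def using ne that by (rule cSUP_least)
  have lip: "f c \<le> f c' + dist c c'" for c c'
  proof (rule least)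
    fix x assume "x \<in> X"
    then show "dist c x \<le> f c' + dist c c'" using up[of x c'] dist_triangle[of c x c'] by simp
  qed
  have cont: "continuous_on S f" for S
    unfolding continuous_on_iff
  proof (intro ballI allI impI)
    fix x e assume "(e::real) > 0"
    show "\<exists>d>0. \<forall>x'\<in>S. dist x' x < d \<longrightarrow> dist (f x') (f x) < e"
    proof (intro exI[of _ e] conjI ballI impI)
      fix x' assume "dist x' x < e"
      moreover have "\<bar>f x' - f x\<bar> \<le> dist x' x" using lip[of x' x] lip[of x x'] by (simp add: dist_commute)
      ultimately show "dist (f x') (f x) < e" by (simp add: dist_real_def)
    qed fact
  qed
  obtain c where c: "c \<in> cball x0 B" and cmin: "\<And>y. y \<in> cball x0 B \<Longrightarrow> f c \<le> f y"
    using continuous_attains_inf[of "cball x0 B" f] cont B[OF x0] by force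
  have fx0: "f x0 \<le> B" using least B by blast
  have gmin: "f c \<le> f y" for y
  proof (cases "y \<in> cball x0 B")
    case True then show ?thesis by (rule cmin)
  next
    case False
    then have "B < dist y x0" by (simp add: dist_commute)
    also have "\<dots> \<le> f y" by (rule up[OF x0])
    finally show ?thesis using cmin[of x0] B[OF x0] fx0 by simp
  qed
  have "minball X c (f c)"
    unfolding minball_def
  proof (intro conjI allI impI)
    show "0 \<le> f c" using up[OF x0, of c] zero_le_dist[of c x0] by linarith
    show "X \<subseteq> cball c (f c)" using up by auto
    fix c' r' assume "X \<subseteq> cball c' r'"
    then have "f c' \<le> r'" by (intro least) auto
    then show "f c \<le> r'" using gmin[of c'] by simp
  qed
  then show ?thesis by blast
qed

lemma midpoint_ineq:
  fixes x c1 c2 :: "'a::euclidean_space"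
  shows "(dist x ((1/2) *\<^sub>R (c1 + c2)))^2 = ((dist x c1)^2 + (dist x c2)^2)/2 - (dist c1 c2)^2/4"
proof -
  define a where "a = x - c1"
  define b where "b = x - c2"
  have 1: "x - (1/2) *\<^sub>R (c1 + c2) = (1/2) *\<^sub>R (a + b)" unfolding a_def b_def by (simp add: algebra_simps flip: scaleR_add_left)
  have 2: "c1 - c2 = b - a" unfolding a_def b_def by simp
  show ?thesis
    unfolding dist_norm 1 2 a_def[symmetric] b_def[symmetric]
    by (simp add: power2_norm_eq_inner inner_add_left inner_add_right inner_diff_left inner_diff_right
        inner_commute field_simps)
qed

lemma minball_unique:
  fixes X :: "'a::euclidean_space set"
  assumes ne: "X \<noteq> {}" and m1: "minball X c1 r1" and m2: "minball X c2 r2"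
  shows "c1 = c2 \<and> r1 = r2"
proof -
  have r: "r1 = r2" using m1 m2 unfolding minball_def by (meson order.antisym)
  show ?thesis
  proof (rule ccontr)
    assume "\<not> (c1 = c2 \<and> r1 = r2)"
    with r have d: "dist c1 c2 > 0" by simp
    define m where "m = (1/2) *\<^sub>R (c1 + c2)"
    define r' where "r' = sqrt (r1^2 - (dist c1 c2)^2/4)"
    obtain x0 where x0: "x0 \<in> X" using ne by blast
    have le: "(dist x m)^2 \<le> r1^2 - (dist c1 c2)^2/4" if "x \<in> X" for x
    proof -
      have "dist c1 x \<le> r1" "dist c2 x \<le> r1" using that m1 m2 r unfolding minball_def by auto
      then have "(dist x c1)^2 \<le> r1^2" "(dist x c2)^2 \<le> r1^2"
        by (simp_all add: dist_commute power_mono)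
      then show ?thesis unfolding m_def midpoint_ineq by simp
    qed
    have "X \<subseteq> cball m r'"
    proof
      fix x assume "x \<in> X"
      then have "(dist x m)^2 \<le> r1^2 - (dist c1 c2)^2/4" by (rule le)
      then have "sqrt ((dist x m)^2) \<le> r'" unfolding r'_def by (rule real_sqrt_le_mono)
      then show "x \<in> cball m r'" by (simp add: dist_commute)
    qed
    then have "r1 \<le> r'" using m1 unfolding minball_def by blast
    moreover have "r' < r1"
    proof -
      have "r1^2 - (dist c1 c2)^2/4 < r1^2" using d by simp
      then have "r' < sqrt (r1^2)" unfolding r'_def by (rule real_sqrt_less_mono)
      then show ?thesis using m1 unfolding minball_def by simp
    qed
    ultimately show False by simp
  qed
qed

lemma enclosing_ball_minball:
  fixes X :: "'a::euclidean_space set"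
  assumes ne: "X \<noteq> {}" and bd: "bounded X" and m: "minball X c r"
  shows "enclosing_ball X = cball c r"
proof -
  have r0: "r \<ge> 0" using m unfolding minball_def by simp
  have "(THE B. is_closed_ball B \<and> X \<subseteq> B \<and>
              (\<forall>B'. is_closed_ball B' \<and> X \<subseteq> B' \<longrightarrow> diameter B \<le> diameter B')) = cball c r"
  proof (rule the_equality)
    show "is_closed_ball (cball c r) \<and> X \<subseteq> cball c r \<and>
              (\<forall>B'. is_closed_ball B' \<and> X \<subseteq> B' \<longrightarrow> diameter (cball c r) \<le> diameter B')"
    proof (intro conjI allI impI)
      show "is_closed_ball (cball c r)" unfolding is_closed_ball_def using r0 by blast
      show "X \<subseteq> cball c r" using m unfolding minball_def by simp
      fix B' assume "is_closed_ball B' \<and> X \<subseteq> B'"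
      then obtain c' r' where "r' \<ge> 0" "B' = cball c' r'" "X \<subseteq> cball c' r'"
        unfolding is_closed_ball_def by blast
      moreover have "r \<le> r'" using m calculation unfolding minball_def by blast
      ultimately show "diameter (cball c r) \<le> diameter B'" using r0 by simp
    qed
  next
    fix B assume B: "is_closed_ball B \<and> X \<subseteq> B \<and>
              (\<forall>B'. is_closed_ball B' \<and> X \<subseteq> B' \<longrightarrow> diameter B \<le> diameter B')"
    then obtain c' r' where r': "r' \<ge> 0" "B = cball c' r'" "X \<subseteq> cball c' r'"
      unfolding is_closed_ball_def by blast
    have "diameter B \<le> diameter (cball c r)"
      using B m r0 unfolding minball_def is_closed_ball_def by blast
    then have "r' \<le> r" using r' r0 by simp
    then have "minball X c' r'" using m r' unfolding minball_def by force
    then have "c' = c \<and> r' = r" using minball_unique[OF ne _ m] by blast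
    then show "B = cball c r" using r' by simp
  qed
  then show ?thesis unfolding enclosing_ball_def using ne bd by simp
qed

lemma measure_minball:
  fixes X :: "'a::euclidean_space set"
  assumes ne: "X \<noteq> {}" and bd: "bounded X" and m: "minball X c r"
  shows "emeasure lebesgue (enclosing_ball X) = ennreal (unit_ball_vol (DIM('a)) * r ^ DIM('a))"
  using enclosing_ball_minball[OF assms] emeasure_cball[of r c] m
  by (simp add: minball_def)

lemma measure_unbounded:
  fixes X :: "'a::euclidean_space set"
  assumes "\<not> bounded X"
  shows "emeasure lebesgue (enclosing_ball X) = \<infinity>"
  using assms unfolding enclosing_ball_def by auto

lemma minball_mono:
  fixes X :: "'a::euclidean_space set"
  assumes "X \<subseteq> Y" "minball X c r" "minball Y c' r'"
  shows "r \<le> r'"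
  using assms unfolding minball_def by (meson order.trans)

lemma measure_mono:
  fixes X :: "'a::euclidean_space set"
  assumes XY: "X \<subseteq> Y"
  shows "emeasure lebesgue (enclosing_ball X) \<le> emeasure lebesgue (enclosing_ball Y)"
proof (cases "X = {}")
  case True
  then show ?thesis
    by (simp add: enclosing_ball_def)
next
  case neX: False
  show ?thesis
  proof (cases "bounded Y")
    case False then show ?thesis by (simp add: measure_unbounded)
  next
    case bY: True
    then have bX: "bounded X" using XY bounded_subset by blast
    have neY: "Y \<noteq> {}" using neX XY by blast
    obtain c r where m: "minball X c r" using minball_exists[OF neX bX] by blast
    obtain c' r' where m': "minball Y c' r'" using minball_exists[OF neY bY] by blast
    have "r \<le> r'" using minball_mono[OF XY m m'] .
    moreover have "r \<ge> 0" using m unfolding minball_def by simp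
    ultimately have "r ^ DIM('a) \<le> r' ^ DIM('a)" by (rule power_mono)
    then show ?thesis
      unfolding measure_minball[OF neX bX m] measure_minball[OF neY bY m']
      by (intro ennreal_leI mult_left_mono) auto
  qed
qed

lemma main_sup:
  fixes X :: "nat \<Rightarrow> 'a::euclidean_space set"
  assumes inc: "incseq X"
  shows "emeasure lebesgue (enclosing_ball (\<Union>n. X n))
           = (SUP n. emeasure lebesgue (enclosing_ball (X n)))"
proof -
  define U where "U = (\<Union>n. X n)"
  define M where "M n = emeasure lebesgue (enclosing_ball (X n))" for n
  define V where "V = unit_ball_vol (DIM('a))"
  have V: "V > 0" unfolding V_def by simp
  have Minc: "incseq M" unfolding M_def incseq_def using inc[unfolded incseq_def]
    by (simp add: measure_mono)
  have le: "M n \<le> emeasure lebesgue (enclosing_ball U)" for n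
    unfolding M_def U_def by (intro measure_mono) auto
  have key: "emeasure lebesgue (enclosing_ball U) = (SUP n. M n)"
  proof (cases "U = {}")
    case True
    then have "X n = U" for n unfolding U_def by auto
    then show ?thesis unfolding M_def by simp
  next
    case neU: False
    then obtain x0 n0 where x0: "x0 \<in> X n0" unfolding U_def by blast
    show ?thesis
    proof (cases "bounded U")
      case False
      then have U: "emeasure lebesgue (enclosing_ball U) = \<infinity>" by (rule measure_unbounded)
      have "(SUP n. M n) = top"
      proof (rule ennreal_SUP_eq_top)
        fix k :: nat
        define B where "B = real k"
        have "\<exists>y\<in>U. dist x0 y > 2 * (B / V + 1)"
          using False bounded_any_center[of U x0] by (meson linorder_not_less)
        then obtain y k1 where y: "y \<in> X k1" "dist x0 y > 2 * (B / V + 1)" unfolding U_def by blast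
        define n where "n = max n0 k1"
        have "X n0 \<subseteq> X n" "X k1 \<subseteq> X n" using inc unfolding n_def incseq_def by auto
        then have xn: "x0 \<in> X n" "y \<in> X n" using x0 y by auto
        show "\<exists>i\<in>UNIV. of_nat k \<le> M i"
        proof (cases "bounded (X n)")
          case False
          then have "M n = \<infinity>" unfolding M_def by (rule measure_unbounded)
          then show ?thesis by (intro bexI[of _ n]) simp_all
        next
          case bn: True
          have nen: "X n \<noteq> {}" using xn by blast
          obtain c r where m: "minball (X n) c r" using minball_exists[OF nen bn] by blast
          have "dist c x0 \<le> r" "dist c y \<le> r" using m xn unfolding minball_def by auto
          then have "dist x0 y \<le> 2 * r" using dist_triangle[of x0 y c] by (simp add: dist_commute)
          then have r1: "r > B / V + 1" using y by simp
          have B0: "B \<ge> 0" unfolding B_def by simp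
          then have "r \<ge> 1" using r1 V by (smt (verit) divide_nonneg_pos)
          then have "r \<le> r ^ DIM('a)" by (intro self_le_power) auto
          have "B = V * (B / V)" using V by simp
          also have "\<dots> \<le> V * r" using r1 V by (intro mult_left_mono) auto
          also have "\<dots> \<le> V * r ^ DIM('a)" using \<open>r \<le> r ^ DIM('a)\<close> V by (intro mult_left_mono) auto
          finally have "ennreal B \<le> ennreal (V * r ^ DIM('a))" by (rule ennreal_leI)
          then have "of_nat k \<le> M n"
            unfolding M_def measure_minball[OF nen bn m] V_def[symmetric] B_def by (simp add: ennreal_of_nat_eq_real_of_nat)
          then show ?thesis by blast
        qed
      qed
      then show ?thesis using U unfolding infinity_ennreal_def by (simp only:)
    next
      case bU: True
      have bX: "bounded (X n)" for n using bU unfolding U_def by (rule bounded_subset) auto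
      have neX: "X (n + n0) \<noteq> {}" for n using x0 inc unfolding incseq_def
        by (metis empty_iff le_add2 subsetD)
      have "\<forall>n. \<exists>c r. minball (X (n + n0)) c r" using minball_exists[OF neX bX] by blast
      then obtain cc rr where mm: "\<And>n. minball (X (n + n0)) (cc n) (rr n)" by metis
      obtain cU R where mU: "minball U cU R" using minball_exists[OF neU bU] by blast
      have rrR: "rr n \<le> R" for n using minball_mono[OF _ mm mU] unfolding U_def by blast
      have rrinc: "incseq rr" unfolding incseq_def
      proof (intro allI impI)
        fix m n :: nat assume "m \<le> n"
        then have "X (m + n0) \<subseteq> X (n + n0)" using inc unfolding incseq_def by simp
        then show "rr m \<le> rr n" using minball_mono mm by blast
      qed
      have bdd: "bdd_above (range rr)" using rrR by (intro bdd_aboveI2) auto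
      define L where "L = (SUP n. rr n)"
      have lim: "rr \<longlonglongrightarrow> L" unfolding L_def by (rule LIMSEQ_incseq_SUP[OF bdd rrinc])
      have rrL: "rr n \<le> L" for n unfolding L_def using bdd by (intro cSUP_upper) simp_all
      have LR: "L \<le> R" unfolding L_def using rrR by (intro cSUP_least) auto
      define F where "F m = cball x0 L \<inter> (\<Inter>x\<in>X (m + n0). cball x L)" for m
      have "\<Inter>(range F) \<noteq> {}"
      proof (rule compact_nest)
        fix n show "compact (F n)" unfolding F_def
          by (intro compact_Int_closed compact_cball closed_INT) auto
        have x0n: "x0 \<in> X (n + n0)" using x0 inc unfolding incseq_def by (metis le_add2 subsetD)
        have "cc n \<in> F n"
        proof -
          have "\<And>x. x \<in> X (n + n0) \<Longrightarrow> dist (cc n) x \<le> rr n" using mm[of n] unfolding minball_def by auto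
          then show ?thesis unfolding F_def using x0n rrL[of n]
            by (auto simp: dist_commute intro: order.trans)
        qed
        then show "F n \<noteq> {}" by blast
      next
        fix m n :: nat assume "m \<le> n"
        then have "X (m + n0) \<subseteq> X (n + n0)" using inc unfolding incseq_def by simp
        then show "F n \<subseteq> F m" unfolding F_def by blast
      qed
      then obtain c where c: "\<And>m. c \<in> F m" by blast
      have "U \<subseteq> cball c L"
      proof
        fix x assume "x \<in> U"
        then obtain k where "x \<in> X k" unfolding U_def by blast
        then have "x \<in> X (k + n0)" using inc unfolding incseq_def by (metis le_add1 subsetD)
        then have "c \<in> cball x L" using c[of k] unfolding F_def by blast
        then show "x \<in> cball c L" by (simp add: dist_commute)
      qed
      then have "R \<le> L" using mU unfolding minball_def by blast
      with LR have LR: "L = R" by simp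
      have "(\<lambda>n. M (n + n0)) \<longlonglongrightarrow> ennreal (V * R ^ DIM('a))"
        unfolding M_def measure_minball[OF neX bX mm] V_def[symmetric]
        by (intro tendsto_ennrealI tendsto_intros lim[unfolded LR])
      then have "M \<longlonglongrightarrow> ennreal (V * R ^ DIM('a))" by (rule LIMSEQ_offset)
      moreover have "M \<longlonglongrightarrow> (SUP n. M n)" by (rule LIMSEQ_SUP[OF Minc])
      ultimately have "(SUP n. M n) = ennreal (V * R ^ DIM('a))" using LIMSEQ_unique by metis
      then show ?thesis using measure_minball[OF neU bU mU] V_def by simp
    qed
  qed
  then show ?thesis unfolding U_def M_def .
qed

theorem lemma9:
  fixes X :: "nat \<Rightarrow> 'a::euclidean_space set"
  assumes "incseq X"
  shows "(\<lambda>n. emeasure lebesgue (enclosing_ball (X n)))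
           \<longlonglongrightarrow> emeasure lebesgue (enclosing_ball (\<Union>n. X n))
         \<and> emeasure lebesgue (enclosing_ball (\<Union>n. X n))
           = (SUP n. emeasure lebesgue (enclosing_ball (X n)))"
proof
  show eq: "emeasure lebesgue (enclosing_ball (\<Union>n. X n))
           = (SUP n. emeasure lebesgue (enclosing_ball (X n)))"
    by (rule main_sup[OF assms])
  have "incseq (\<lambda>n. emeasure lebesgue (enclosing_ball (X n)))"
    using assms unfolding incseq_def by (simp add: measure_mono)
  then show "(\<lambda>n. emeasure lebesgue (enclosing_ball (X n)))
           \<longlonglongrightarrow> emeasure lebesgue (enclosing_ball (\<Union>n. X n))"
    unfolding eq by (rule LIMSEQ_SUP)
qed

end
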